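(* Let $r\ge2$ be an integer, $c>0$ and $f\in\mathcal{P}_c$. Then for every $n\in\mathbb{N}_0$, $$H_tf(x)=\min_{k\in\{0,1,\dots,r^n\}}q_f\Big(t,x;\frac{k}{r^n}\Big)\quad\text{for all }(t,x)\in\Big[\frac{1}{2cr^n},\infty\Big)\times[0,1].$$
   Context: $C_p(\mathbb{R})$ denotes the set of all continuous functions $f:\mathbb{R}\to\mathbb{R}$ periodic with period $1$ with $f(0)=0$; $\mathbb{N}_0=\mathbb{N}\cup\{0\}$. For such $f$, $q_f(t,x;z)=f(z)+\frac{1}{2t}(x-z)^2$ and $H_tf(x)=\inf_{z\in\mathbb{R}}q_f(t,x;z)$ for $t>0$, $x\in\mathbb{R}$. For $(n,k,y)\in\mathbb{N}_0\times\mathbb{Z}\times(0,1)$: $\delta^+_{n,k}(y;f)=\dfrac{f(\frac{k+1}{r^n})-f(\frac{k+y}{r^n})}{\frac{1-y}{r^n}}$, $\delta^-_{n,k}(y;f)=\dfrac{f(\frac{k+y}{r^n})-f(\frac{k}{r^n})}{\frac{y}{r^n}}$. $\mathcal{P}_c$ is the set of $f\in C_p(\mathbb{R})$ with $\delta^+_{n,k}(y;f)-\delta^-_{n,k}(y;f)\le-c$ for all $(n,k,y)\in\mathbb{N}_0\times\mathbb{Z}\times(0,1)$. *)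

theory Defs
  imports "HOL-Analysis.Analysis"
begin

definition Cp :: "(real \<Rightarrow> real) set" where
  "Cp = {f. continuous_on UNIV f \<and> (\<forall>x. f (x + 1) = f x) \<and> f 0 = 0}"

definition qf :: "(real \<Rightarrow> real) \<Rightarrow> real \<Rightarrow> real \<Rightarrow> real \<Rightarrow> real" where
  "qf f t x z = f z + (x - z)^2 / (2 * t)"

definition Ht :: "real \<Rightarrow> (real \<Rightarrow> real) \<Rightarrow> real \<Rightarrow> real" where
  "Ht t f x = (INF z. qf f t x z)"

definition delta_plus :: "nat \<Rightarrow> (real \<Rightarrow> real) \<Rightarrow> nat \<Rightarrow> int \<Rightarrow> real \<Rightarrow> real" where
  "delta_plus r f n k y =
     (f ((of_int k + 1) / real r ^ n) - f ((of_int k + y) / real r ^ n)) / ((1 - y) / real r ^ n)"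

definition delta_minus :: "nat \<Rightarrow> (real \<Rightarrow> real) \<Rightarrow> nat \<Rightarrow> int \<Rightarrow> real \<Rightarrow> real" where
  "delta_minus r f n k y =
     (f ((of_int k + y) / real r ^ n) - f (of_int k / real r ^ n)) / (y / real r ^ n)"

definition Pc :: "nat \<Rightarrow> real \<Rightarrow> (real \<Rightarrow> real) set" where
  "Pc r c = {f \<in> Cp. \<forall>n k y. 0 < y \<and> y < 1 \<longrightarrow>
               delta_plus r f n k y - delta_minus r f n k y \<le> - c}"

end

theory Submission
  imports Defs
begin

lemma key:
  fixes A B F a x y h t c :: real
  assumes h: "h > 0" and y: "0 < y" "y < 1" and t: "t > 0" and tc: "2*t*c \<ge> h" and c: "c > 0"
    and cond: "(B-F)/((1-y)*h) - (F-A)/(y*h) \<le> -c"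
  shows "min (A + (x-a)^2/(2*t)) (B + (x-(a+h))^2/(2*t)) \<le> F + (x-(a+y*h))^2/(2*t)"
proof -
  have p: "y*(1-y)*h > 0" using h y by simp
  have "((B-F)/((1-y)*h) - (F-A)/(y*h)) * (y*(1-y)*h) \<le> -c * (y*(1-y)*h)"
    using mult_right_mono[OF cond less_imp_le[OF p]] by simp
  also have "((B-F)/((1-y)*h) - (F-A)/(y*h)) * (y*(1-y)*h) = (B-F)*y - (F-A)*(1-y)"
    using h y by (simp add: field_simps)
  finally have F: "F \<ge> (1-y)*A + y*B + c*y*(1-y)*h" by (simp add: algebra_simps)
  have g: "(x-(a+y*h))^2/(2*t) = (1-y)*((x-a)^2/(2*t)) + y*((x-(a+h))^2/(2*t)) - y*(1-y)*h^2/(2*t)"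
    using t by (simp add: field_simps power2_eq_square)
  have "h^2/(2*t) \<le> c*h"
  proof -
    have "h^2 \<le> c*h*(2*t)" using tc h by (simp add: power2_eq_square mult_left_mono algebra_simps)
    then show ?thesis using t by (simp add: divide_simps)
  qed
  then have "y*(1-y)*(h^2/(2*t)) \<le> y*(1-y)*(c*h)" using y by (intro mult_left_mono) auto
  then have "F + (x-(a+y*h))^2/(2*t) \<ge> (1-y)*(A + (x-a)^2/(2*t)) + y*(B + (x-(a+h))^2/(2*t))"
    using F g by (simp add: algebra_simps)
  moreover have "(1-y)*(A + (x-a)^2/(2*t)) + y*(B + (x-(a+h))^2/(2*t)) \<ge> min (A + (x-a)^2/(2*t)) (B + (x-(a+h))^2/(2*t))"
  proof -
    let ?m = "min (A + (x-a)^2/(2*t)) (B + (x-(a+h))^2/(2*t))"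
    have "(1-y)*?m \<le> (1-y)*(A + (x-a)^2/(2*t))" using y by (intro mult_left_mono) auto
    moreover have "y*?m \<le> y*(B + (x-(a+h))^2/(2*t))" using y by (intro mult_left_mono) auto
    ultimately show ?thesis by (simp add: algebra_simps)
  qed
  ultimately show ?thesis by linarith
qed

lemma fint_nat: assumes "f \<in> Cp" shows "f (real m) = 0"
proof (induction m)
  case 0 then show ?case using assms by (simp add: Cp_def)
next
  case (Suc m)
  have "f (real m + 1) = f (real m)" using assms by (simp add: Cp_def)
  then show ?case using Suc by (simp add: add.commute)
qed

lemma fint_neg: assumes "f \<in> Cp" shows "f (- real m) = 0"
proof (induction m)
  case 0 then show ?case using assms by (simp add: Cp_def)
next
  case (Suc m)
  have per: "\<forall>x. f (x + 1) = f x" using assms by (simp add: Cp_def)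
  have "f (- real (Suc m) + 1) = f (- real (Suc m))" using per by (rule spec)
  moreover have "- real (Suc m) + 1 = - real m" by simp
  ultimately have "f (- real (Suc m)) = f (- real m)" by (simp only:)
  then show ?case using Suc by (simp only:)
qed

lemma fint: assumes "f \<in> Cp" shows "f (of_int k) = 0"
proof (cases "k \<ge> 0")
  case True
  then obtain m where "k = int m" using zero_le_imp_eq_int by blast
  then show ?thesis using fint_nat[OF assms, of m] by simp
next
  case False
  then have "k = - int (nat (-k))" by simp
  then obtain m where "k = - int m" by blast
  then show ?thesis using fint_neg[OF assms, of m] by simp
qed

lemma Pc_cond:
  assumes "f \<in> Pc r c" "0 < y" "y < 1"
  shows "delta_plus r f n k y - delta_minus r f n k y \<le> - c"
proof -
  have "f \<in> Cp \<and> (\<forall>n k y. 0 < y \<and> y < 1 \<longrightarrow> delta_plus r f n k y - delta_minus r f n k y \<le> - c)"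
    using assms(1) unfolding Pc_def mem_Collect_eq .
  then have P: "\<forall>n k y. 0 < y \<and> y < 1 \<longrightarrow> delta_plus r f n k y - delta_minus r f n k y \<le> - c"
    by (rule conjunct2)
  show ?thesis using assms(2,3) by (intro P[rule_format] conjI)
qed

lemma fnonneg:
  assumes "c > 0" and f: "f \<in> Pc r c" shows "f z \<ge> 0"
proof -
  have cp: "f \<in> Cp" using f unfolding Pc_def mem_Collect_eq by (rule conjunct1)
  define k where "k = floor z"
  define y where "y = z - of_int k"
  have y0: "0 \<le> y" "y < 1" unfolding y_def k_def by linarith+
  show ?thesis
  proof (cases "y = 0")
    case True
    then have "z = of_int k" using y_def by linarith
    then show ?thesis using fint[OF cp, of k] by (simp only:)
  next
    case False
    then have yp: "0 < y" using y0 by linarith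
    have D: "delta_plus r f 0 k y - delta_minus r f 0 k y \<le> - c"
      using Pc_cond[OF f yp y0(2)] .
    have a1: "f (of_int k + 1) = 0" using fint[OF cp, of "k+1"] by simp
    have a2: "f (of_int k) = 0" using fint[OF cp] by simp
    have a3: "of_int k + y = z" using y_def by linarith
    have "delta_plus r f 0 k y = - f z / (1 - y)"
      unfolding delta_plus_def power_0 div_by_1 a1 a3 by simp
    moreover have "delta_minus r f 0 k y = f z / y"
      unfolding delta_minus_def power_0 div_by_1 a2 a3 by simp
    ultimately have h: "- f z / (1 - y) - f z / y \<le> - c" using D by simp
    show ?thesis
    proof (rule ccontr)
      assume "\<not> f z \<ge> 0"
      then have n: "f z \<le> 0" by simp
      have "f z / (1 - y) \<le> 0" using n y0 by (intro divide_nonpos_pos) auto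
      moreover have "f z / y \<le> 0" using n yp by (intro divide_nonpos_pos) auto
      moreover have "- f z / (1 - y) = - (f z / (1 - y))" by (rule minus_divide_left[symmetric])
      ultimately show False using h assms(1) by linarith
    qed
  qed
qed

theorem theorem4p2:
  fixes r :: nat and c :: real and f :: "real \<Rightarrow> real"
  assumes "r \<ge> 2" and "c > 0" and "f \<in> Pc r c"
  shows "\<forall>n::nat. \<forall>t x. t \<ge> 1 / (2 * c * real r ^ n) \<and> 0 \<le> x \<and> x \<le> 1 \<longrightarrow>
           Ht t f x = (MIN k\<in>{0..r ^ n}. qf f t x (real k / real r ^ n))"
proof (intro allI impI)
  fix n :: nat and t x :: real
  assume H: "t \<ge> 1 / (2 * c * real r ^ n) \<and> 0 \<le> x \<and> x \<le> 1"
  define R where "R = real r ^ n"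
  have R1: "R \<ge> 1" unfolding R_def using assms(1) by (simp add: one_le_power)
  have Rpos: "R > 0" using R1 by simp
  have "1/(2*c*real r ^ n) > 0" using assms(2) Rpos R_def by simp
  then have tpos: "t > 0" using H by linarith
  have tc: "2*t*c \<ge> 1/R"
  proof -
    have "1 / (2 * c * R) \<le> t" using H R_def by simp
    then have "1 \<le> t * (2*c*R)" using assms(2) Rpos by (simp add: divide_simps)
    then show ?thesis using Rpos by (simp add: divide_simps algebra_simps)
  qed
  have cp: "f \<in> Cp" using assms(3) by (simp add: Pc_def)
  define q where "q z = qf f t x z" for z
  define m where "m = (MIN k\<in>{0..r ^ n}. q (real k / R))"
  have fin: "finite ((\<lambda>k. q (real k / R)) ` {0..r^n})" by simp
  have ne: "(\<lambda>k. q (real k / R)) ` {0..r^n} \<noteq> {}" by simp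
  have mle: "m \<le> q (real k / R)" if "k \<le> r^n" for k
    unfolding m_def using that fin by (intro Min_le) auto
  have min_in: "m \<in> (\<lambda>k. q (real k / R)) ` {0..r^n}"
    unfolding m_def using fin ne by (rule Min_in)
  have q0: "m \<le> q 0" using mle[of 0] by simp
  have eq1: "real (r^n) / R = 1" using Rpos R_def by simp
  have q1: "m \<le> q 1" using mle[of "r^n", OF order_refl] unfolding eq1 .
  have lower: "m \<le> q z" for z
  proof -
    consider "z < 0" | "z > 1" | "0 \<le> z \<and> z \<le> 1" by linarith
    then show ?thesis
    proof cases
      case 1
      have "x^2 \<le> (x - z)^2" using 1 H by (intro power_mono) auto
      then have "x^2/(2*t) \<le> (x - z)^2/(2*t)" using tpos by (intro divide_right_mono) auto
      then have "q 0 \<le> q z" using fnonneg[OF assms(2,3), of z] cp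
        by (simp add: q_def qf_def Cp_def)
      then show ?thesis using q0 by linarith
    next
      case 2
      have "(1-x)^2 \<le> (z-x)^2" using 2 H by (intro power_mono) auto
      then have "(x-1)^2 \<le> (x - z)^2" by (simp add: power2_commute)
      then have "(x-1)^2/(2*t) \<le> (x - z)^2/(2*t)" using tpos by (intro divide_right_mono) auto
      moreover have "f 1 = 0" using fint[OF cp, of 1] by simp
      ultimately have "q 1 \<le> q z" using fnonneg[OF assms(2,3), of z]
        by (simp add: q_def qf_def)
      then show ?thesis using q1 by linarith
    next
      case 3
      define k where "k = nat (floor (z*R))"
      have zR0: "z*R \<ge> 0" using 3 Rpos by simp
      have kle: "real k \<le> z*R" unfolding k_def using zR0 by linarith
      have klt: "z*R < real k + 1" unfolding k_def using zR0 by linarith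
      have zRle: "z*R \<le> R" using 3 Rpos by simp
      have RR: "R = real (r^n)" unfolding R_def by simp
      show ?thesis
      proof (cases "z*R = real k")
        case True
        then have "z = real k / R" using Rpos by (simp add: eq_divide_eq)
        moreover have "k \<le> r^n" using True zRle RR by linarith
        ultimately show ?thesis using mle by simp
      next
        case False
        define y where "y = z*R - real k"
        have y: "0 < y" "y < 1" using kle klt False y_def by auto
        have "real k < R" using kle False zRle by linarith
        then have k1: "k + 1 \<le> r^n" using RR by linarith
        have cond: "delta_plus r f n (int k) y - delta_minus r f n (int k) y \<le> - c"
          using assms(3) y by (simp add: Pc_def)
        define a where "a = real k / R"
        define h where "h = 1 / R"
        have e1: "(of_int (int k) + 1) / real r ^ n = a + h" unfolding a_def h_def R_def by (simp add: add_divide_distrib)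
        have kyz: "real k + y = z*R" unfolding y_def by simp
        have e2': "(real k + y) / R = z" unfolding kyz using Rpos by simp
        have e2: "(of_int (int k) + y) / real r ^ n = z" using e2' unfolding R_def by simp
        have e3: "(1 - y) / real r ^ n = (1-y)*h" unfolding h_def R_def by simp
        have e4: "y / real r ^ n = y*h" unfolding h_def R_def by simp
        have e5: "of_int (int k) / real r ^ n = a" unfolding a_def R_def by simp
        have cond': "(f (a+h) - f z)/((1-y)*h) - (f z - f a)/(y*h) \<le> -c"
          using cond unfolding delta_plus_def delta_minus_def e1 e2 e3 e4 e5 .
        have "a + y*h = (real k + y) / R" unfolding a_def h_def by (simp add: add_divide_distrib)
        then have zz: "a + y*h = z" using e2' by simp
        have "min (f a + (x-a)^2/(2*t)) (f (a+h) + (x-(a+h))^2/(2*t)) \<le> f z + (x-(a+y*h))^2/(2*t)"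
          using key[OF _ y tpos _ assms(2) cond'] tc Rpos unfolding h_def by simp
        then have "min (q a) (q (a+h)) \<le> q z" using zz by (simp add: q_def qf_def)
        moreover have "m \<le> q a" using mle[of k] k1 a_def by simp
        moreover have "a + h = real (k+1) / R" unfolding a_def h_def by (simp add: add_divide_distrib)
        then have "m \<le> q (a+h)" using mle[of "k+1"] k1 by simp
        ultimately show ?thesis by linarith
      qed
    qed
  qed
  obtain k0 where k0: "k0 \<in> {0..r^n}" "m = q (real k0 / R)" using min_in by auto
  have bdd: "bdd_below (range q)" using lower by (intro bdd_belowI2) 
  have "(INF z. q z) \<le> q (real k0 / R)" by (rule cINF_lower[OF bdd UNIV_I])
  then have "(INF z. q z) \<le> m" using k0 by simp
  moreover have "m \<le> (INF z. q z)" using lower by (intro cINF_greatest) auto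
  ultimately have I: "(INF z. q z) = m" by linarith
  have I2: "Ht t f x = (INF z. q z)" unfolding Ht_def q_def by (rule refl)
  have I3: "m = (MIN k\<in>{0..r ^ n}. qf f t x (real k / real r ^ n))"
    unfolding m_def q_def R_def by (rule refl)
  show "Ht t f x = (MIN k\<in>{0..r ^ n}. qf f t x (real k / real r ^ n))"
    using I2 I I3 by (rule trans[OF trans])
qed

end
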